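(* Let $n\ge 1$, let $\mathbf{A}\in\mathbb{R}^{n\times n}$ be symmetric positive semidefinite, $\mathbf{b}\in\mathbb{R}^n$, and let $h(\mathbf{x})=\sum_{i=1}^n\varphi(\mathbf{x}_i)$, where $\varphi:\mathbb{R}\to\mathbb{R}\cup\{+\infty\}$ is proper, lower semicontinuous and convex. Put $f(\mathbf{x})=\tfrac12\mathbf{x}^T\mathbf{A}\mathbf{x}+\mathbf{x}^T\mathbf{b}+h(\mathbf{x})$, and let $\mathbf{x}^*$ be a minimizer of $f$. Write $\mathbf{A}=\mathbf{L}+\mathbf{D}+\mathbf{L}^T$, where $\mathbf{D}$ is the diagonal part and $\mathbf{L}$ the strictly lower triangular part of $\mathbf{A}$. Fix $\omega\in(0,2)$ and $\theta\ge0$ with $\mathbf{D}_{i,i}+\theta>0$ for all $i$. Set $\mathbf{B}=\mathbf{L}+\tfrac1\omega(\mathbf{D}+\theta\mathbf{I})$ and $\mathbf{C}=\mathbf{L}^T+\tfrac1\omega((\omega-1)\mathbf{D}-\theta\mathbf{I})$. Let $\mathcal{T}(\mathbf{x})$ be the unique $\mathbf{z}$ with $\mathbf{0}\in\mathbf{B}\mathbf{z}+\mathbf{b}+\mathbf{C}\mathbf{x}+\partial h(\mathbf{z})$. Let $\mathbf{x}\in\mathbb{R}^n$ be a (bounded) point that is not a minimizer of $f$. Then there exists a constant $\eta\in(0,\infty)$ such that $\|\mathbf{x}-\mathbf{x}^*\|\le\eta\,\|\mathbf{x}-\mathcal{T}(\mathbf{x})\|$.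
   Context: $\partial h$ is the convex subdifferential, and $\|\cdot\|$ is the Euclidean norm. $\mathcal{T}$ is well defined because $\mathbf{B}$ is lower triangular with positive diagonal and $h$ is separable. *)

theory Defs
  imports "HOL-Analysis.Analysis" "HOL-Library.Extended_Real" "HOL-Library.Liminf_Limsup"
begin

definition proper_fun :: "('a \<Rightarrow> ereal) \<Rightarrow> bool" where
  "proper_fun g \<longleftrightarrow> (\<forall>x. g x \<noteq> -\<infinity>) \<and> (\<exists>x. g x \<noteq> \<infinity>)"

definition lsc_fun :: "('a::topological_space \<Rightarrow> ereal) \<Rightarrow> bool" where
  "lsc_fun g \<longleftrightarrow> (\<forall>x. g x \<le> Liminf (at x) g)"

definition convex_efun :: "('a::real_vector \<Rightarrow> ereal) \<Rightarrow> bool" where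
  "convex_efun g \<longleftrightarrow>
     (\<forall>x y t. 0 \<le> t \<and> t \<le> 1 \<longrightarrow>
        g ((1 - t) *\<^sub>R x + t *\<^sub>R y) \<le> ereal (1 - t) * g x + ereal t * g y)"

definition subdiff :: "('a::real_inner \<Rightarrow> ereal) \<Rightarrow> 'a \<Rightarrow> 'a set" where
  "subdiff g z = {v. g z \<noteq> \<infinity> \<and> (\<forall>y. g z + ereal (v \<bullet> (y - z)) \<le> g y)}"

definition sep_fun :: "(real \<Rightarrow> ereal) \<Rightarrow> real^'n \<Rightarrow> ereal" where
  "sep_fun phi x = (\<Sum>i\<in>UNIV. phi (x $ i))"

definition qobj :: "real^'n^'n \<Rightarrow> real^'n \<Rightarrow> (real \<Rightarrow> ereal) \<Rightarrow> real^'n \<Rightarrow> ereal" where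
  "qobj A b phi x = ereal ((1/2) * (x \<bullet> (A *v x)) + x \<bullet> b) + sep_fun phi x"

definition is_minimizer :: "('a \<Rightarrow> ereal) \<Rightarrow> 'a \<Rightarrow> bool" where
  "is_minimizer g x \<longleftrightarrow> (\<forall>y. g x \<le> g y)"

definition diag_part :: "real^'n^'n \<Rightarrow> real^'n^'n" where
  "diag_part A = (\<chi> i j. if i = j then A $ i $ j else 0)"

definition strict_lower :: "real^('n::{finite,linorder})^'n::{finite,linorder} \<Rightarrow> real^'n::{finite,linorder}^'n::{finite,linorder}" where
  "strict_lower A = (\<chi> i j. if j < i then A $ i $ j else 0)"

definition Bmat :: "real^('n::{finite,linorder})^'n::{finite,linorder} \<Rightarrow> real \<Rightarrow> real \<Rightarrow> real^'n::{finite,linorder}^'n::{finite,linorder}" where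
  "Bmat A \<omega> \<theta> = strict_lower A + (1/\<omega>) *\<^sub>R (diag_part A + \<theta> *\<^sub>R mat 1)"

definition Cmat :: "real^('n::{finite,linorder})^'n::{finite,linorder} \<Rightarrow> real \<Rightarrow> real \<Rightarrow> real^'n::{finite,linorder}^'n::{finite,linorder}" where
  "Cmat A \<omega> \<theta> = transpose (strict_lower A) + (1/\<omega>) *\<^sub>R ((\<omega> - 1) *\<^sub>R diag_part A - \<theta> *\<^sub>R mat 1)"

definition Top :: "real^('n::{finite,linorder})^'n::{finite,linorder} \<Rightarrow> real^'n::{finite,linorder} \<Rightarrow> (real \<Rightarrow> ereal) \<Rightarrow> real \<Rightarrow> real \<Rightarrow> real^'n::{finite,linorder} \<Rightarrow> real^'n::{finite,linorder}" where
  "Top A b phi \<omega> \<theta> x =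
     (THE z. - (Bmat A \<omega> \<theta> *v z + b + Cmat A \<omega> \<theta> *v x) \<in> subdiff (sep_fun phi) z)"

end

theory Submission
  imports Defs
begin


lemma lsc_local:
  fixes phi :: "real \<Rightarrow> ereal"
  assumes "lsc_fun phi" "c < phi x"
  shows "\<exists>e>0. \<forall>y. dist y x < e \<longrightarrow> c < phi y"
proof -
  have "c < Liminf (at x) phi" using assms unfolding lsc_fun_def by (meson less_le_trans)
  then obtain e where e: "e > 0" "c < (INF y\<in>(ball x e - {x}). phi y)"
    unfolding Liminf_at by (auto simp: less_SUP_iff)
  show ?thesis
  proof (intro exI[of _ e] conjI allI impI)
    fix y assume "dist y x < e"
    show "c < phi y"
    proof (cases "y = x")
      case True then show ?thesis using assms by simp
    next
      case False
      then have "y \<in> ball x e - {x}" using \<open>dist y x < e\<close> by (simp add: dist_commute)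
      then show ?thesis using less_INF_D[OF e(2)] by blast
    qed
  qed (use e in auto)
qed

lemma lower_bound:
  fixes phi :: "real \<Rightarrow> ereal"
  assumes proper: "proper_fun phi" and lsc: "lsc_fun phi" and cvx: "convex_efun phi"
  shows "\<exists>a k. 0 \<le> k \<and> (\<forall>t. ereal (a - k * \<bar>t\<bar>) \<le> phi t)"
proof -
  obtain t0 where "phi t0 \<noteq> \<infinity>" using proper unfolding proper_fun_def by auto
  moreover have "phi t0 \<noteq> -\<infinity>" using proper unfolding proper_fun_def by auto
  ultimately obtain p where p: "phi t0 = ereal p" by (cases "phi t0") auto
  obtain e where e: "e > 0" "\<forall>y. dist y t0 < e \<longrightarrow> ereal (p - 1) < phi y"
    using lsc_local[OF lsc, of "ereal (p - 1)" t0] p by auto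
  have main: "ereal (p - 1 - 2 * \<bar>t - t0\<bar> / e) \<le> phi t" for t
  proof (cases "phi t")
    case (real s)
    show ?thesis
    proof (cases "\<bar>t - t0\<bar> < e")
      case True
      then have "ereal (p - 1) < phi t" using e(2) by (simp add: dist_real_def)
      moreover have "p - 1 - 2 * \<bar>t - t0\<bar> / e \<le> p - 1" using e(1) by simp
      ultimately show ?thesis by (metis ereal_less_eq(3) less_imp_le order_trans)
    next
      case False
      define l where "l = e / (2 * \<bar>t - t0\<bar>)"
      have tt: "\<bar>t - t0\<bar> > 0" using False e(1) by linarith
      have l0: "0 < l" "l \<le> 1" using tt False e(1) by (auto simp: l_def field_simps)
      define u where "u = (1 - l) * t0 + l * t"
      have "u - t0 = l * (t - t0)" by (simp add: u_def algebra_simps)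
      then have "\<bar>u - t0\<bar> = e / 2" using tt e(1) by (simp add: l_def abs_mult)
      then have "ereal (p - 1) < phi u" using e by (simp add: dist_real_def)
      moreover have "phi u \<le> ereal (1 - l) * phi t0 + ereal l * phi t"
        using cvx l0 unfolding convex_efun_def u_def by (auto)
      ultimately have "ereal (p - 1) < ereal ((1 - l) * p + l * s)" using p real by (metis less_le_trans times_ereal.simps(1) plus_ereal.simps(1))
      then have "p - 1 < (1 - l) * p + l * s" by simp
      then have "l * (p - 1/l) < l * s" using l0 by (simp add: algebra_simps)
      then have "p - 1 / l < s" using l0 by simp
      moreover have "1 / l = 2 * \<bar>t - t0\<bar> / e" using tt e by (simp add: l_def)
      ultimately show ?thesis using real e by simp
    qed
  next
    case PInf then show ?thesis by simp
  next
    case MInf then show ?thesis using proper unfolding proper_fun_def by auto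
  qed
  show ?thesis
  proof (intro exI conjI allI)
    fix t
    have "p - 1 - 2 * \<bar>t0\<bar> / e - (2 / e) * \<bar>t\<bar> \<le> p - 1 - 2 * \<bar>t - t0\<bar> / e"
    proof -
      have "\<bar>t - t0\<bar> \<le> \<bar>t0\<bar> + \<bar>t\<bar>" by linarith
      then have "2 * \<bar>t - t0\<bar> / e \<le> 2 * (\<bar>t0\<bar> + \<bar>t\<bar>) / e" using e(1) by (simp add: divide_right_mono)
      then show ?thesis by (simp add: add_divide_distrib)
    qed
    then show "ereal (p - 1 - 2 * \<bar>t0\<bar> / e - 2 / e * \<bar>t\<bar>) \<le> phi t"
      using main[of t] by (metis ereal_less_eq(3) order_trans)
  qed (use e in simp)
qed



lemma G_local:
  fixes phi :: "real \<Rightarrow> ereal" and q :: "real \<Rightarrow> real"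
  assumes lsc: "lsc_fun phi" and qc: "continuous_on UNIV q" and c: "ereal c < ereal (q t) + phi t"
  shows "\<exists>e>0. \<forall>y. dist y t < e \<longrightarrow> ereal c < ereal (q y) + phi y"
proof -
  have "ereal (c - q t) < phi t" using c by (cases "phi t") auto
  then obtain s where s: "ereal (c - q t) < ereal s" "ereal s < phi t" using ereal_dense2 by blast
  obtain e1 where e1: "e1 > 0" "\<forall>y. dist y t < e1 \<longrightarrow> ereal s < phi y"
    using lsc_local[OF lsc s(2)] by auto
  have sig: "s - (c - q t) > 0" using s(1) by simp
  have "isCont q t" using qc by (simp add: continuous_on_eq_continuous_at)
  then obtain e2 where e2: "e2 > 0" "\<forall>y. y \<noteq> t \<and> norm (y - t) < e2 \<longrightarrow> norm (q y - q t) < s - (c - q t)"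
    unfolding isCont_def LIM_eq using sig by blast
  show ?thesis
  proof (intro exI[of _ "min e1 e2"] conjI allI impI)
    fix y assume y: "dist y t < min e1 e2"
    have py: "ereal s < phi y" using e1 y by simp
    have qy: "q y > q t - (s - (c - q t))"
    proof (cases "y = t")
      case True then show ?thesis using sig by simp
    next
      case False then have "norm (q y - q t) < s - (c - q t)" using e2 y by (simp add: dist_norm)
      then show ?thesis by simp
    qed
    show "ereal c < ereal (q y) + phi y"
    proof (cases "phi y")
      case (real v) then show ?thesis using py qy by simp
    next
      case PInf then show ?thesis by simp
    next
      case MInf then show ?thesis using py by simp
    qed
  qed (use e1 e2 in auto)
qed

lemma exists_min:
  fixes phi :: "real \<Rightarrow> ereal" and q :: "real \<Rightarrow> real"
  assumes lsc: "lsc_fun phi" and qc: "continuous_on UNIV q"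
    and K: "compact K" "t0 \<in> K"
  shows "\<exists>t\<in>K. \<forall>y\<in>K. ereal (q t) + phi t \<le> ereal (q y) + phi y"
proof (rule ccontr)
  define G where "G y = ereal (q y) + phi y" for y
  define m where "m = (INF y\<in>K. G y)"
  assume "\<not> ?thesis"
  then have lt: "\<forall>t\<in>K. m < G t"
    unfolding G_def[symmetric] m_def by (metis INF_lower le_less)
  have "\<forall>t\<in>K. \<exists>ce. m < ereal (fst ce) \<and> snd ce > 0 \<and> (\<forall>y. dist y t < snd ce \<longrightarrow> ereal (fst ce) < G y)"
  proof
    fix t assume "t \<in> K"
    then obtain c where c: "m < ereal c" "ereal c < G t" using lt ereal_dense2 by blast
    then obtain e where "e > 0" "\<forall>y. dist y t < e \<longrightarrow> ereal c < G y"
      using G_local[OF lsc qc, of c t] unfolding G_def by auto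
    then show "\<exists>ce. m < ereal (fst ce) \<and> snd ce > 0 \<and> (\<forall>y. dist y t < snd ce \<longrightarrow> ereal (fst ce) < G y)"
      using c by (intro exI[of _ "(c, e)"]) auto
  qed
  then obtain CE where CE: "\<And>t. t \<in> K \<Longrightarrow> m < ereal (fst (CE t)) \<and> snd (CE t) > 0 \<and> (\<forall>y. dist y t < snd (CE t) \<longrightarrow> ereal (fst (CE t)) < G y)"
    by metis
  have "K \<subseteq> (\<Union>t\<in>K. ball t (snd (CE t)))"
    using CE by (auto simp: dist_commute)
  then obtain T where T: "T \<subseteq> K" "finite T" "K \<subseteq> (\<Union>t\<in>T. ball t (snd (CE t)))"
    using compactE_image[OF K(1), of K "\<lambda>t. ball t (snd (CE t))"] by auto
  have Tne: "T \<noteq> {}" using T K(2) by auto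
  define c0 where "c0 = Min ((\<lambda>t. fst (CE t)) ` T)"
  have "c0 \<in> (\<lambda>t. fst (CE t)) ` T" unfolding c0_def using T Tne by (intro Min_in) auto
  then have mc0: "m < ereal c0" using CE T by auto
  have "ereal c0 \<le> G y" if yK: "y \<in> K" for y
  proof -
    obtain t where t: "t \<in> T" "dist t y < snd (CE t)" using T(3) yK by (auto simp: mem_ball)
    have "c0 \<le> fst (CE t)" unfolding c0_def using T t by auto
    moreover have "ereal (fst (CE t)) < G y" using CE[of t] t T by (auto simp: dist_commute)
    ultimately show ?thesis by (metis ereal_less_eq(3) le_less order_trans)
  qed
  then have "ereal c0 \<le> m" unfolding m_def by (rule INF_greatest)
  then show False using mc0 by simp
qed



lemma coercive_aux:
  fixes d M a P y :: real
  assumes d: "d > 0" and M: "M \<ge> 0" and y: "\<bar>y\<bar> \<ge> 2 * (M + \<bar>P - a\<bar> + 1) / d + 1"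
  shows "d / 2 * y^2 - M * \<bar>y\<bar> + a > P"
proof -
  have "d / 2 * \<bar>y\<bar> \<ge> M + \<bar>P - a\<bar> + 1"
  proof -
    have "d / 2 * \<bar>y\<bar> \<ge> d / 2 * (2 * (M + \<bar>P - a\<bar> + 1) / d)"
      using y d by (intro mult_left_mono) auto
    also have "d / 2 * (2 * (M + \<bar>P - a\<bar> + 1) / d) = M + \<bar>P - a\<bar> + 1" using d by simp
    finally show ?thesis .
  qed
  then have "d / 2 * \<bar>y\<bar> * \<bar>y\<bar> \<ge> (M + \<bar>P - a\<bar> + 1) * \<bar>y\<bar>"
    by (intro mult_right_mono) auto
  moreover have "(M + \<bar>P - a\<bar> + 1) * \<bar>y\<bar> \<ge> M * \<bar>y\<bar> + (\<bar>P - a\<bar> + 1)"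
  proof -
    have "(\<bar>P - a\<bar> + 1) * \<bar>y\<bar> \<ge> (\<bar>P - a\<bar> + 1) * 1"
      using y d M by (intro mult_left_mono) (auto, smt (verit) divide_nonneg_pos)
    then show ?thesis by (simp add: algebra_simps)
  qed
  moreover have "y^2 = \<bar>y\<bar> * \<bar>y\<bar>" by (simp add: power2_eq_square abs_mult_self_eq)
  ultimately show ?thesis by (smt (verit, best) mult.assoc)
qed

lemma one_dim:
  fixes phi :: "real \<Rightarrow> ereal"
  assumes proper: "proper_fun phi" and lsc: "lsc_fun phi" and cvx: "convex_efun phi"
    and d: "d > 0"
  shows "\<exists>t. phi t \<noteq> \<infinity> \<and> (\<forall>y. phi t + ereal (- (d * t + r) * (y - t)) \<le> phi y)"
proof -
  define q where "q y = d / 2 * y^2 + r * y" for y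
  have qc: "continuous_on UNIV q" unfolding q_def by (intro continuous_intros)
  obtain a k where ak: "0 \<le> k" "\<forall>t. ereal (a - k * \<bar>t\<bar>) \<le> phi t"
    using lower_bound[OF proper lsc cvx] by auto
  obtain t0 where "phi t0 \<noteq> \<infinity>" using proper unfolding proper_fun_def by auto
  moreover have "phi t0 \<noteq> -\<infinity>" using proper unfolding proper_fun_def by auto
  ultimately obtain p where p: "phi t0 = ereal p" by (cases "phi t0") auto
  define P where "P = q t0 + p"
  define M where "M = \<bar>r\<bar> + k"
  define R where "R = 2 * (M + \<bar>P - a\<bar> + 1) / d + 1 + \<bar>t0\<bar>"
  have out: "ereal P < ereal (q y) + phi y" if "\<bar>y\<bar> > R" for y
  proof -
    have "\<bar>y\<bar> \<ge> 2 * (M + \<bar>P - a\<bar> + 1) / d + 1" using that unfolding R_def by simp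
    then have "d / 2 * y^2 - M * \<bar>y\<bar> + a > P" using coercive_aux[OF d] ak(1) unfolding M_def by simp
    moreover have "q y \<ge> d / 2 * y^2 - \<bar>r\<bar> * \<bar>y\<bar>"
    proof -
      have "- \<bar>r * y\<bar> \<le> r * y" by simp
      then show ?thesis unfolding q_def abs_mult by linarith
    qed
    ultimately have "P < q y + (a - k * \<bar>y\<bar>)" unfolding M_def by (simp add: algebra_simps)
    then have "ereal P < ereal (q y) + ereal (a - k * \<bar>y\<bar>)" by simp
    also have "\<dots> \<le> ereal (q y) + phi y" using ak(2) by (intro add_left_mono) auto
    finally show ?thesis .
  qed
  have fr: "0 \<le> 2 * (M + \<bar>P - a\<bar> + 1) / d" using ak(1) d unfolding M_def by simp
  have K: "compact {-R..R}" "t0 \<in> {-R..R}" unfolding R_def using fr by auto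
  obtain t where t: "t \<in> {-R..R}" "\<forall>y\<in>{-R..R}. ereal (q t) + phi t \<le> ereal (q y) + phi y"
    using exists_min[OF lsc qc K] by blast
  have tmin: "ereal (q t) + phi t \<le> ereal (q y) + phi y" for y
  proof (cases "y \<in> {-R..R}")
    case True then show ?thesis using t by auto
  next
    case False
    then have "\<bar>y\<bar> > R" by auto
    then have "ereal P < ereal (q y) + phi y" by (rule out)
    moreover have "ereal (q t) + phi t \<le> ereal P" using t K p unfolding P_def by (metis plus_ereal.simps(1))
    ultimately show ?thesis by simp
  qed
  have "ereal (q t) + phi t \<le> ereal P" using tmin[of t0] p unfolding P_def by simp
  then have fin: "phi t \<noteq> \<infinity>" by auto
  have nm: "phi t \<noteq> -\<infinity>" using proper unfolding proper_fun_def by auto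
  obtain pt where pt: "phi t = ereal pt" using fin nm by (cases "phi t") auto
  show ?thesis
  proof (intro exI conjI allI)
    show "phi t \<noteq> \<infinity>" by fact
    fix y
    show "phi t + ereal (- (d * t + r) * (y - t)) \<le> phi y"
    proof (cases "phi y")
      case PInf then show ?thesis using pt by simp
    next
      case MInf then show ?thesis using proper unfolding proper_fun_def by auto
    next
      case (real s)
      define g where "g = d * t + r"
      define \<delta> where "\<delta> = y - t"
      have key: "pt - g * \<delta> - s \<le> d / 2 * l * \<delta>^2" if l: "0 < l" "l \<le> 1" for l
      proof -
        define u where "u = (1 - l) * t + l * y"
        have "phi u \<le> ereal (1 - l) * phi t + ereal l * phi y"
          using cvx l unfolding convex_efun_def u_def by auto
        then have pu: "phi u \<le> ereal ((1 - l) * pt + l * s)" using pt real by simp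
        have "ereal (q t) + phi t \<le> ereal (q u) + phi u" by (rule tmin)
        also have "\<dots> \<le> ereal (q u) + ereal ((1 - l) * pt + l * s)" using pu by (intro add_left_mono)
        finally have "q t + pt \<le> q u + ((1 - l) * pt + l * s)" using pt by simp
        moreover have "q u = q t + g * l * \<delta> + d / 2 * l^2 * \<delta>^2"
          unfolding q_def u_def g_def \<delta>_def by (simp add: power2_eq_square algebra_simps)
        ultimately have "l * (pt - g * \<delta> - s) \<le> l * (d / 2 * l * \<delta>^2)"
          by (simp add: algebra_simps power2_eq_square)
        then show ?thesis using l by simp
      qed
      have "pt - g * \<delta> - s \<le> 0"
      proof (rule ccontr)
        assume "\<not> ?thesis"
        then have eps: "pt - g * \<delta> - s > 0" by simp
        define l where "l = min 1 ((pt - g * \<delta> - s) / (d * \<delta>^2 + 1))"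
        have dp: "d * \<delta>^2 + 1 > 0" using d by (smt (verit) mult_nonneg_nonneg zero_le_power2)
        have l: "0 < l" "l \<le> 1" using eps dp unfolding l_def by auto
        have "d / 2 * l * \<delta>^2 \<le> d / 2 * ((pt - g * \<delta> - s) / (d * \<delta>^2 + 1)) * \<delta>^2"
          using d by (intro mult_right_mono mult_left_mono) (auto simp: l_def)
        also have "\<dots> = (pt - g * \<delta> - s) * (d * \<delta>^2 / (2 * (d * \<delta>^2 + 1)))"
          by (simp add: field_simps)
        also have "\<dots> < (pt - g * \<delta> - s) * 1"
        proof -
          have "d * \<delta>^2 / (2 * (d * \<delta>^2 + 1)) < 1" using dp
            by (simp add: divide_less_eq add_pos_nonneg)
          then show ?thesis using eps by (intro mult_strict_left_mono) auto
        qed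
        finally show False using key[OF l] by simp
      qed
      then show ?thesis using pt real unfolding g_def \<delta>_def by (simp add: algebra_simps)
    qed
  qed
qed



lemma sep_subdiff:
  fixes phi :: "real \<Rightarrow> ereal" and z v :: "real^'n"
  assumes proper: "proper_fun phi"
    and H: "\<forall>i. phi (z$i) \<noteq> \<infinity> \<and> (\<forall>y. phi (z$i) + ereal (v$i * (y - z$i)) \<le> phi y)"
  shows "v \<in> subdiff (sep_fun phi) z"
proof -
  define pz where "pz i = real_of_ereal (phi (z$i))" for i
  have pz: "phi (z$i) = ereal (pz i)" for i
  proof -
    have "phi (z$i) \<noteq> \<infinity>" "phi (z$i) \<noteq> -\<infinity>" using H proper unfolding proper_fun_def by auto
    then show ?thesis unfolding pz_def by (cases "phi (z$i)") auto
  qed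
  have sz: "sep_fun phi z = ereal (\<Sum>i\<in>UNIV. pz i)" unfolding sep_fun_def pz by (rule sum_ereal)
  have "sep_fun phi z + ereal (v \<bullet> (y - z)) \<le> sep_fun phi y" for y
  proof -
    have "v \<bullet> (y - z) = (\<Sum>i\<in>UNIV. v$i * (y$i - z$i))" unfolding inner_vec_def by simp
    then have "sep_fun phi z + ereal (v \<bullet> (y - z)) = ereal (\<Sum>i\<in>UNIV. pz i + v$i * (y$i - z$i))"
      unfolding sz by (simp add: sum.distrib)
    also have "\<dots> = (\<Sum>i\<in>UNIV. ereal (pz i + v$i * (y$i - z$i)))" by (rule sum_ereal[symmetric])
    also have "\<dots> \<le> (\<Sum>i\<in>UNIV. phi (y$i))"
    proof (rule sum_mono)
      fix i
      have "ereal (pz i + v$i * (y$i - z$i)) = phi (z$i) + ereal (v$i * (y$i - z$i))" by (simp add: pz)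
      also have "\<dots> \<le> phi (y$i)" using H by blast
      finally show "ereal (pz i + v$i * (y$i - z$i)) \<le> phi (y$i)" .
    qed
    finally show ?thesis unfolding sep_fun_def .
  qed
  then show ?thesis unfolding subdiff_def using sz by simp
qed

lemma Bmat_row:
  fixes A :: "real^('n::{finite,linorder})^'n::{finite,linorder}"
  shows "(Bmat A \<omega> \<theta> *v z) $ i = (\<Sum>j\<in>{j. j < i}. A$i$j * z$j) + ((A$i$i + \<theta>) / \<omega>) * z$i"
proof -
  have b: "Bmat A \<omega> \<theta> $ i $ j = (if j < i then A$i$j else 0) + (if j = i then (A$i$i + \<theta>) / \<omega> else 0)" for j
    unfolding Bmat_def strict_lower_def diag_part_def by (auto simp: mat_def add_divide_distrib)
  have "(Bmat A \<omega> \<theta> *v z) $ i = (\<Sum>j\<in>UNIV. (if j < i then A$i$j * z$j else 0) + (if j = i then ((A$i$i + \<theta>) / \<omega>) * z$i else 0))"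
    unfolding matrix_vector_mult_def vec_lambda_beta b by (intro sum.cong refl) (auto simp: distrib_right)
  also have "\<dots> = (\<Sum>j\<in>{j. j < i}. A$i$j * z$j) + ((A$i$i + \<theta>) / \<omega>) * z$i"
    by (simp add: sum.distrib sum.If_cases)
  finally show ?thesis .
qed

lemma BC_sum:
  fixes A :: "real^('n::{finite,linorder})^'n::{finite,linorder}"
  assumes symA: "transpose A = A" and om: "\<omega> \<noteq> 0"
  shows "Bmat A \<omega> \<theta> + Cmat A \<omega> \<theta> = A"
proof -
  have "(Bmat A \<omega> \<theta> + Cmat A \<omega> \<theta>) $ i $ j = A $ i $ j" for i j
  proof -
    have s: "A $ j $ i = A $ i $ j" using symA by (metis transpose_def vec_lambda_beta)
    have e: "(Bmat A \<omega> \<theta> + Cmat A \<omega> \<theta>) $ i $ j =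
      (if j < i then A$i$j else 0) + (if i < j then A$j$i else 0)
      + (1/\<omega>) * ((if i = j then A$i$j else 0) + \<theta> * (if i = j then 1 else 0))
      + (1/\<omega>) * ((\<omega> - 1) * (if i = j then A$i$j else 0) - \<theta> * (if i = j then 1 else 0))"
      unfolding Bmat_def Cmat_def strict_lower_def diag_part_def transpose_def mat_def
      by (simp only: vector_add_component vector_scaleR_component vector_minus_component vec_lambda_beta real_scaleR_def)
    show ?thesis
    proof (cases i j rule: linorder_cases)
      case less then show ?thesis unfolding e using s by auto
    next
      case equal
      have "(1/\<omega>) * (a + \<theta>) + (1/\<omega>) * ((\<omega> - 1) * a - \<theta>) = a" for a
        using om by (simp add: field_simps)
      then show ?thesis unfolding e using equal by simp
    next
      case greater then show ?thesis unfolding e by auto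
    qed
  qed
  then show ?thesis by (simp add: vec_eq_iff)
qed



lemma sum_ne_minf:
  fixes f :: "'a \<Rightarrow> ereal"
  assumes "finite P" "\<forall>i\<in>P. f i \<noteq> -\<infinity>"
  shows "sum f P \<noteq> -\<infinity>"
  using assms
proof (induct P rule: finite_induct)
  case (insert x F)
  then have "f x \<noteq> -\<infinity>" "sum f F \<noteq> -\<infinity>" by auto
  then show ?case using insert by (cases "f x"; cases "sum f F") auto
qed simp

lemma sep_ne_minf:
  assumes "proper_fun phi"
  shows "sep_fun phi z \<noteq> -\<infinity>"
  unfolding sep_fun_def using assms unfolding proper_fun_def by (intro sum_ne_minf) auto

lemma sym_inner:
  fixes A :: "real^'n^'n"
  assumes symA: "transpose A = A"
  shows "x \<bullet> (A *v y) = y \<bullet> (A *v x)"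
proof -
  have "x \<bullet> (A *v y) = (x v* A) \<bullet> y" by (rule dot_lmul_matrix[symmetric])
  also have "\<dots> = (transpose A *v x) \<bullet> y" by simp
  also have "\<dots> = y \<bullet> (A *v x)" using symA by (simp add: inner_commute)
  finally show ?thesis .
qed

lemma quad:
  fixes A :: "real^'n^'n"
  assumes symA: "transpose A = A" and psdA: "\<forall>v. 0 \<le> v \<bullet> (A *v v)"
  shows "(1/2) * (x \<bullet> (A *v x)) + x \<bullet> b \<le> (1/2) * (y \<bullet> (A *v y)) + y \<bullet> b + (- (A *v x + b)) \<bullet> (y - x)"
proof -
  have p: "0 \<le> (y - x) \<bullet> (A *v (y - x))" using psdA by blast
  have "(y - x) \<bullet> (A *v (y - x)) = y \<bullet> (A *v y) - 2 * (y \<bullet> (A *v x)) + x \<bullet> (A *v x)"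
    using sym_inner[OF symA, of x y]
    by (simp add: matrix_vector_mult_diff_distrib inner_diff_left inner_diff_right)
  moreover have "(- (A *v x + b)) \<bullet> (y - x) = - (y \<bullet> (A *v x)) + x \<bullet> (A *v x) - y \<bullet> b + x \<bullet> b"
    by (simp add: inner_diff_right inner_add_left inner_commute)
  ultimately show ?thesis using p by simp
qed

lemma split3:
  fixes f :: "'n::{finite,linorder} \<Rightarrow> real"
  shows "(\<Sum>j\<in>UNIV. f j) = (\<Sum>j\<in>{j. j < i}. f j) + f i + (\<Sum>j\<in>{j. i < j}. f j)"
proof -
  have "(\<Sum>j\<in>UNIV. f j) = (\<Sum>j\<in>UNIV. (if j < i then f j else 0) + (if j = i then f j else 0) + (if i < j then f j else 0))"
    by (intro sum.cong refl) auto
  also have "\<dots> = (\<Sum>j\<in>{j. j < i}. f j) + f i + (\<Sum>j\<in>{j. i < j}. f j)"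
    by (simp add: sum.distrib sum.If_cases)
  finally show ?thesis .
qed

lemma B_pos:
  fixes A :: "real^('n::{finite,linorder})^'n::{finite,linorder}"
  assumes symA: "transpose A = A" and psdA: "\<forall>v. 0 \<le> v \<bullet> (A *v v)"
    and omega: "0 < \<omega>" "\<omega> < 2" and theta: "0 \<le> \<theta>" "\<forall>i. 0 < A $ i $ i + \<theta>"
    and w: "w \<noteq> 0"
  shows "0 < w \<bullet> (Bmat A \<omega> \<theta> *v w)"
proof -
  define T1 where "T1 = (\<Sum>i\<in>UNIV. \<Sum>j\<in>{j. j < i}. w$i * A$i$j * w$j)"
  define T3 where "T3 = (\<Sum>i\<in>UNIV. \<Sum>j\<in>{j. i < j}. w$i * A$i$j * w$j)"
  define Dg where "Dg = (\<Sum>i\<in>UNIV. A$i$i * (w$i)^2)"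
  define E where "E = (\<Sum>i\<in>UNIV. ((A$i$i + \<theta>) / \<omega>) * (w$i)^2)"
  have sA: "A$j$i = A$i$j" for i j using symA by (metis transpose_def vec_lambda_beta)
  have "w \<bullet> (A *v w) = (\<Sum>i\<in>UNIV. \<Sum>j\<in>UNIV. w$i * A$i$j * w$j)"
    unfolding inner_vec_def matrix_vector_mult_def by (simp add: sum_distrib_left mult.assoc)
  also have "\<dots> = (\<Sum>i\<in>UNIV. (\<Sum>j\<in>{j. j < i}. w$i * A$i$j * w$j) + A$i$i * (w$i)^2 + (\<Sum>j\<in>{j. i < j}. w$i * A$i$j * w$j))"
    by (intro sum.cong refl, subst split3) (simp add: power2_eq_square algebra_simps)
  also have "\<dots> = T1 + Dg + T3" unfolding T1_def T3_def Dg_def by (simp add: sum.distrib)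
  finally have wA: "w \<bullet> (A *v w) = T1 + Dg + T3" .
  have "T3 = (\<Sum>j\<in>UNIV. \<Sum>i\<in>{i. i < j}. w$i * A$i$j * w$j)"
    unfolding T3_def using sum.swap_restrict[of UNIV UNIV "\<lambda>i j. w$i * A$i$j * w$j" "\<lambda>i j. i < j"] by simp
  also have "\<dots> = T1" unfolding T1_def by (intro sum.cong refl) (simp add: sA mult.commute mult.left_commute)
  finally have T31: "T3 = T1" .
  have "w \<bullet> (Bmat A \<omega> \<theta> *v w) = (\<Sum>i\<in>UNIV. w$i * ((\<Sum>j\<in>{j. j < i}. A$i$j * w$j) + ((A$i$i + \<theta>) / \<omega>) * w$i))"
    unfolding inner_vec_def Bmat_row by simp
  also have "\<dots> = T1 + E" unfolding T1_def E_def
    by (simp add: sum.distrib sum_distrib_left power2_eq_square algebra_simps)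
  finally have wB: "w \<bullet> (Bmat A \<omega> \<theta> *v w) = T1 + E" .
  have "E - Dg / 2 = (\<Sum>i\<in>UNIV. ((A$i$i + \<theta>) / \<omega> - A$i$i / 2) * (w$i)^2)"
    unfolding E_def Dg_def by (simp add: sum_subtractf sum_divide_distrib algebra_simps)
  moreover have "0 < (\<Sum>i\<in>UNIV. ((A$i$i + \<theta>) / \<omega> - A$i$i / 2) * (w$i)^2)"
  proof -
    have c: "0 < (A$i$i + \<theta>) / \<omega> - A$i$i / 2" for i
    proof -
      have "(A$i$i + \<theta>) / 2 < (A$i$i + \<theta>) / \<omega>" using omega theta(2)
        by (intro divide_strict_left_mono) auto
      then show ?thesis using theta(1) by simp
    qed
    obtain k where k: "w$k \<noteq> 0" using w by (metis vec_eq_iff zero_index)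
    have "0 < ((A$k$k + \<theta>) / \<omega> - A$k$k / 2) * (w$k)^2" using c k by simp
    also have "\<dots> \<le> (\<Sum>i\<in>UNIV. ((A$i$i + \<theta>) / \<omega> - A$i$i / 2) * (w$i)^2)"
      by (intro member_le_sum) (auto intro!: mult_nonneg_nonneg less_imp_le[OF c])
    finally show ?thesis .
  qed
  moreover have "0 \<le> T1 + Dg / 2"
  proof -
    have "0 \<le> w \<bullet> (A *v w)" using psdA by blast
    then show ?thesis using wA T31 by linarith
  qed
  ultimately show ?thesis using wB by linarith
qed



lemma rank_strict:
  fixes i j :: "'n::{finite,linorder}"
  assumes "i < j"
  shows "card {k. k < i} < card {k. k < j}"
  using assms by (intro psubset_card_mono) auto

lemma rank_less_iff:
  fixes i j :: "'n::{finite,linorder}"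
  shows "card {k. k < i} < card {k. k < j} \<longleftrightarrow> i < j"
  using rank_strict[of i j] rank_strict[of j i] by (cases i j rule: linorder_cases) auto

lemma exist_vec:
  fixes A :: "real^('n::{finite,linorder})^'n::{finite,linorder}" and c :: "real^'n::{finite,linorder}" and e :: "'n \<Rightarrow> real"
  assumes proper: "proper_fun phi" and lsc: "lsc_fun phi" and cvx: "convex_efun phi"
    and e: "\<forall>i. 0 < e i"
  shows "\<exists>z::real^'n::{finite,linorder}. \<forall>i. phi (z$i) \<noteq> \<infinity> \<and> (\<forall>y. phi (z$i) + ereal (- ((\<Sum>j\<in>{j. j < i}. A$i$j * z$j) + e i * z$i + c$i) * (y - z$i)) \<le> phi y)"
proof -
  define G where "G z i \<longleftrightarrow> phi (z$i) \<noteq> \<infinity> \<and> (\<forall>y. phi (z$i) + ereal (- ((\<Sum>j\<in>{j. j < i}. A$i$j * z$j) + e i * z$i + c$i) * (y - z$i)) \<le> phi y)"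
    for z :: "real^'n::{finite,linorder}" and i
  have Gcong: "G z' i = G z i" if "\<forall>j. j \<le> i \<longrightarrow> z'$j = z$j" for z z' i
  proof -
    have "(\<Sum>j\<in>{j. j < i}. A$i$j * z'$j) = (\<Sum>j\<in>{j. j < i}. A$i$j * z$j)"
      using that by (intro sum.cong refl) auto
    moreover have "z'$i = z$i" using that by auto
    ultimately show ?thesis unfolding G_def by simp
  qed
  have "\<exists>z. \<forall>i. card {j. j < i} < k \<longrightarrow> G z i" for k :: nat
  proof (induction k)
    case 0 then show ?case by simp
  next
    case (Suc k)
    then obtain z where z: "\<forall>i. card {j. j < i} < k \<longrightarrow> G z i" by blast
    show ?case
    proof (cases "\<exists>i0::'n. card {j. j < i0} = k")
      case False
      show ?thesis
      proof (intro exI[of _ z] allI impI)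
        fix i :: "'n" assume "card {j. j < i} < Suc k"
        moreover have "card {j. j < i} \<noteq> k" using False by blast
        ultimately have "card {j. j < i} < k" by simp
        then show "G z i" using z by blast
      qed
    next
      case True
      then obtain i0 :: "'n" where i0: "card {j. j < i0} = k" by blast
      obtain t where t: "phi t \<noteq> \<infinity> \<and> (\<forall>y. phi t + ereal (- (e i0 * t + ((\<Sum>j\<in>{j. j < i0}. A$i0$j * z$j) + c$i0)) * (y - t)) \<le> phi y)"
        using one_dim[OF proper lsc cvx e[rule_format, of i0]] by blast
      define z' where "z' = (\<chi> j. if j = i0 then t else z$j)"
      have "G z' i" if "card {j. j < i} < Suc k" for i
      proof (cases "i = i0")
        case True
        have "(\<Sum>j\<in>{j. j < i0}. A$i0$j * z'$j) = (\<Sum>j\<in>{j. j < i0}. A$i0$j * z$j)"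
          unfolding z'_def by (intro sum.cong refl) auto
        moreover have "z'$i0 = t" unfolding z'_def by simp
        ultimately show ?thesis unfolding G_def True using t by (simp add: algebra_simps)
      next
        case False
        then have "card {j. j < i} \<noteq> card {j. j < i0}"
        proof -
          have "i < i0 \<or> i0 < i" using False by (simp add: linorder_neq_iff)
          then show ?thesis using rank_strict[of i i0] rank_strict[of i0 i] by auto
        qed
        then have lt: "card {j. j < i} < k" using that i0 by simp
        then have "i < i0" using rank_less_iff[of i i0] i0 by simp
        then have "\<forall>j. j \<le> i \<longrightarrow> z'$j = z$j" unfolding z'_def by auto
        then show ?thesis using Gcong z lt by blast
      qed
      then show ?thesis by (intro exI[of _ z']) blast
    qed
  qed
  then obtain z where z: "\<forall>i. card {j. j < i} < Suc (CARD('n)) \<longrightarrow> G z i" by blast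
  have "card {j::'n::{finite,linorder}. j < i} < Suc (CARD('n))" for i
    using card_mono[of UNIV "{j::'n::{finite,linorder}. j < i}"] by simp
  then show ?thesis using z unfolding G_def by blast
qed



theorem lemma2:
  fixes A :: "real^('n::{finite,linorder})^'n::{finite,linorder}" and b :: "real^'n::{finite,linorder}" and phi :: "real \<Rightarrow> ereal"
    and xstar x :: "real^'n::{finite,linorder}" and \<omega> \<theta> :: real
  assumes symA: "transpose A = A"
    and psdA: "\<forall>v. 0 \<le> v \<bullet> (A *v v)"
    and proper: "proper_fun phi" and lsc: "lsc_fun phi" and cvx: "convex_efun phi"
    and xstar_min: "is_minimizer (qobj A b phi) xstar"
    and omega: "0 < \<omega>" "\<omega> < 2"
    and theta: "0 \<le> \<theta>" "\<forall>i. 0 < A $ i $ i + \<theta>"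
    and notmin: "\<not> is_minimizer (qobj A b phi) x"
  shows "\<exists>\<eta>::real. 0 < \<eta> \<and> norm (x - xstar) \<le> \<eta> * norm (x - Top A b phi \<omega> \<theta> x)"
proof -
  define P where "P z \<longleftrightarrow> - (Bmat A \<omega> \<theta> *v z + b + Cmat A \<omega> \<theta> *v x) \<in> subdiff (sep_fun phi) z" for z
  have ex: "\<exists>z. P z"
  proof -
    define c where "c = b + Cmat A \<omega> \<theta> *v x"
    define e where "e i = (A$i$i + \<theta>) / \<omega>" for i
    have "\<forall>i. 0 < e i" using omega theta unfolding e_def by simp
    then obtain z where z: "\<forall>i. phi (z$i) \<noteq> \<infinity> \<and> (\<forall>y. phi (z$i) + ereal (- ((\<Sum>j\<in>{j. j < i}. A$i$j * z$j) + e i * z$i + c$i) * (y - z$i)) \<le> phi y)"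
      using exist_vec[OF proper lsc cvx, of e A c] by blast
    have "- (Bmat A \<omega> \<theta> *v z + b + Cmat A \<omega> \<theta> *v x) \<in> subdiff (sep_fun phi) z"
    proof (rule sep_subdiff[OF proper])
      have "(- (Bmat A \<omega> \<theta> *v z + b + Cmat A \<omega> \<theta> *v x)) $ i = - ((\<Sum>j\<in>{j. j < i}. A$i$j * z$j) + e i * z$i + c$i)" for i
      proof -
        have "(- (Bmat A \<omega> \<theta> *v z + b + Cmat A \<omega> \<theta> *v x)) $ i = - ((Bmat A \<omega> \<theta> *v z) $ i + c $ i)"
          unfolding c_def by (simp only: vector_uminus_component vector_add_component add.assoc)
        then show ?thesis unfolding Bmat_row e_def by simp
      qed
      then show "\<forall>i. phi (z$i) \<noteq> \<infinity> \<and> (\<forall>y. phi (z$i) + ereal ((- (Bmat A \<omega> \<theta> *v z + b + Cmat A \<omega> \<theta> *v x)) $ i * (y - z$i)) \<le> phi y)"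
        using z by simp
    qed
    then show ?thesis unfolding P_def by blast
  qed
  have uniq: "z1 = z2" if p1: "P z1" and p2: "P z2" for z1 z2
  proof (rule ccontr)
    assume ne: "z1 \<noteq> z2"
    define v1 where "v1 = - (Bmat A \<omega> \<theta> *v z1 + b + Cmat A \<omega> \<theta> *v x)"
    define v2 where "v2 = - (Bmat A \<omega> \<theta> *v z2 + b + Cmat A \<omega> \<theta> *v x)"
    have s1: "sep_fun phi z1 \<noteq> \<infinity>" "sep_fun phi z1 + ereal (v1 \<bullet> (z2 - z1)) \<le> sep_fun phi z2"
      using p1 unfolding P_def subdiff_def v1_def by auto
    have s2: "sep_fun phi z2 \<noteq> \<infinity>" "sep_fun phi z2 + ereal (v2 \<bullet> (z1 - z2)) \<le> sep_fun phi z1"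
      using p2 unfolding P_def subdiff_def v2_def by auto
    obtain H1 where H1: "sep_fun phi z1 = ereal H1" using s1(1) sep_ne_minf[OF proper, of z1] by (cases "sep_fun phi z1") auto
    obtain H2 where H2: "sep_fun phi z2 = ereal H2" using s2(1) sep_ne_minf[OF proper, of z2] by (cases "sep_fun phi z2") auto
    have "H1 + v1 \<bullet> (z2 - z1) \<le> H2" "H2 + v2 \<bullet> (z1 - z2) \<le> H1" using s1 s2 H1 H2 by auto
    then have le: "v1 \<bullet> (z2 - z1) + v2 \<bullet> (z1 - z2) \<le> 0" by simp
    have "v1 \<bullet> (z2 - z1) + v2 \<bullet> (z1 - z2) = (v2 - v1) \<bullet> (z1 - z2)"
      by (simp add: inner_diff_left inner_diff_right)
    also have "v2 - v1 = Bmat A \<omega> \<theta> *v (z1 - z2)"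
      unfolding v1_def v2_def by (simp add: matrix_vector_mult_diff_distrib)
    finally have "(z1 - z2) \<bullet> (Bmat A \<omega> \<theta> *v (z1 - z2)) \<le> 0" using le by (simp add: inner_commute)
    moreover have "0 < (z1 - z2) \<bullet> (Bmat A \<omega> \<theta> *v (z1 - z2))"
      using B_pos[OF symA psdA omega theta] ne by simp
    ultimately show False by simp
  qed
  have PT: "P (Top A b phi \<omega> \<theta> x)"
  proof -
    have "\<exists>!z. P z" using ex uniq by blast
    then have "P (THE z. P z)" by (rule theI')
    then show ?thesis unfolding Top_def P_def .
  qed
  have neq: "Top A b phi \<omega> \<theta> x \<noteq> x"
  proof
    assume "Top A b phi \<omega> \<theta> x = x"
    then have "P x" using PT by simp
    moreover have "Bmat A \<omega> \<theta> *v x + b + Cmat A \<omega> \<theta> *v x = A *v x + b"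
    proof -
      have "Bmat A \<omega> \<theta> *v x + Cmat A \<omega> \<theta> *v x = A *v x"
        using BC_sum[OF symA, of \<omega> \<theta>] omega by (simp add: matrix_vector_mult_add_rdistrib[symmetric])
      then show ?thesis by (simp add: algebra_simps)
    qed
    ultimately have sd: "- (A *v x + b) \<in> subdiff (sep_fun phi) x" unfolding P_def by simp
    then have hx: "sep_fun phi x \<noteq> \<infinity>" unfolding subdiff_def by auto
    obtain H where H: "sep_fun phi x = ereal H" using hx sep_ne_minf[OF proper, of x] by (cases "sep_fun phi x") auto
    have "qobj A b phi x \<le> qobj A b phi y" for y
    proof -
      have "ereal H + ereal ((- (A *v x + b)) \<bullet> (y - x)) \<le> sep_fun phi y"
        using sd H unfolding subdiff_def by auto
      then have f1: "ereal ((1/2) * (y \<bullet> (A *v y)) + y \<bullet> b) + ereal (H + (- (A *v x + b)) \<bullet> (y - x)) \<le> qobj A b phi y"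
        unfolding qobj_def by (intro add_left_mono) simp
      have f2: "(1/2) * (x \<bullet> (A *v x)) + x \<bullet> b + H \<le> ((1/2) * (y \<bullet> (A *v y)) + y \<bullet> b) + (H + (- (A *v x + b)) \<bullet> (y - x))"
        using quad[OF symA psdA, of x b y] by simp
      have "qobj A b phi x = ereal ((1/2) * (x \<bullet> (A *v x)) + x \<bullet> b + H)" unfolding qobj_def H by simp
      also have "\<dots> \<le> ereal (((1/2) * (y \<bullet> (A *v y)) + y \<bullet> b) + (H + (- (A *v x + b)) \<bullet> (y - x)))"
        using f2 by (simp only: ereal_less_eq(3))
      also have "\<dots> = ereal ((1/2) * (y \<bullet> (A *v y)) + y \<bullet> b) + ereal (H + (- (A *v x + b)) \<bullet> (y - x))"
        by simp
      also have "\<dots> \<le> qobj A b phi y" by (rule f1)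
      finally show ?thesis .
    qed
    then show False using notmin unfolding is_minimizer_def by blast
  qed
  then have pos: "0 < norm (x - Top A b phi \<omega> \<theta> x)" by simp
  show ?thesis
  proof (intro exI conjI)
    show "0 < norm (x - xstar) / norm (x - Top A b phi \<omega> \<theta> x) + 1"
      using pos by (simp add: add_nonneg_pos)
    have "(norm (x - xstar) / norm (x - Top A b phi \<omega> \<theta> x) + 1) * norm (x - Top A b phi \<omega> \<theta> x)
        = norm (x - xstar) + norm (x - Top A b phi \<omega> \<theta> x)" using pos by (simp add: field_simps)
    then show "norm (x - xstar) \<le> (norm (x - xstar) / norm (x - Top A b phi \<omega> \<theta> x) + 1) * norm (x - Top A b phi \<omega> \<theta> x)"
      by simp
  qed
qed

end
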